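(* Let $N\ge 1$, $T\ge 1$, and let $(x_1,\mathbf{y}_1),\dots,(x_N,\mathbf{y}_N)\in\mathbb{R}\times\mathbb{R}^T$ be training data with $x_1<x_2<\dots<x_N$. Fix a width $K\ge N^2$. Consider the problem $$\min_{\theta}\ \sum_{k=1}^K\|\mathbf{v}_k\|_2\quad\text{subject to}\quad |w_k|=1\ (k=1,\dots,K),\qquad f_\theta(x_i)=\mathbf{y}_i\ (i=1,\dots,N),\tag{P}$$ where $f_\theta(x)=\sum_{k=1}^K \mathbf{v}_k(w_kx+b_k)_+ + \mathbf{a}x+\mathbf{c}$ with $w_k,b_k\in\mathbb{R}$, $\mathbf{v}_k,\mathbf{a},\mathbf{c}\in\mathbb{R}^T$, and $\theta=(\{\mathbf{v}_k,w_k,b_k\}_{k=1}^K,\mathbf{a},\mathbf{c})$. A function $f:\mathbb{R}\to\mathbb{R}^T$ is called a solution of (P) if $f=f_\theta$ for some optimal $\theta$ of (P). Then the connect-the-dots interpolant $f_{\mathcal{D}}$ is always a solution of (P). Moreover, the solution of (P) is non-unique (i.e., there exist optimal $\theta,\theta'$ with $f_\theta\neq f_{\theta'}$) if and only if for some $i\in\{2,\dots,N-2\}$ the two vectors $$\mathbf{s}_i-\mathbf{s}_{i-1}=\frac{\mathbf{y}_{i+1}-\mathbf{y}_i}{x_{i+1}-x_i}-\frac{\mathbf{y}_i-\mathbf{y}_{i-1}}{x_i-x_{i-1}},\qquad \mathbf{s}_{i+1}-\mathbf{s}_i=\frac{\mathbf{y}_{i+2}-\mathbf{y}_{i+1}}{x_{i+2}-x_{i+1}}-\frac{\mathbf{y}_{i+1}-\mathbf{y}_i}{x_{i+1}-x_i}$$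 are both nonzero and aligned. If this condition is not satisfied, then $f_{\mathcal{D}}$ is the unique solution of (P). Furthermore, if $T>1$ and $N>1$, the set of all data $(x_1,\dots,x_N,\mathbf{y}_1,\dots,\mathbf{y}_N)$ (with $x_1<\dots<x_N$) for which (P) has non-unique solutions has Lebesgue measure zero as a subset of $\mathbb{R}^N\times\mathbb{R}^{T\times N}$.
   Context: $(z)_+=\max\{0,z\}$. For $i=1,\dots,N-1$, $\mathbf{s}_i=\frac{\mathbf{y}_{i+1}-\mathbf{y}_i}{x_{i+1}-x_i}\in\mathbb{R}^T$. The connect-the-dots interpolant $f_{\mathcal{D}}=(f_{\mathcal{D}_1},\dots,f_{\mathcal{D}_T}):\mathbb{R}\to\mathbb{R}^T$ is the continuous piecewise linear function which, in each coordinate $t$, interpolates the points $(x_i,y_{it})$ and is linear on each $[x_i,x_{i+1}]$, is linear with slope $\mathbf{s}_1$ on $(-\infty,x_2]$ and linear with slope $\mathbf{s}_{N-1}$ on $[x_{N-1},\infty)$. Two vectors $\mathbf{u}_1,\mathbf{u}_2$ are aligned if $\mathbf{u}_1^\top\mathbf{u}_2=\|\mathbf{u}_1\|_2\|\mathbf{u}_2\|_2$. *)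

theory Defs
  imports "HOL-Analysis.Analysis"
begin

text \<open>Vectors in R^T are modelled as real ^ 't with CARD('t) = T.
  Data points are indexed by 1..N, neurons by 1..K.\<close>

definition relu :: "real \<Rightarrow> real" where
  "relu z = max 0 z"

text \<open>Parameters theta = (v, w, b, a, c); only indices 1..K of v, w, b are used.\<close>
type_synonym 't param =
  "(nat \<Rightarrow> real ^ 't) \<times> (nat \<Rightarrow> real) \<times> (nat \<Rightarrow> real) \<times> (real ^ 't) \<times> (real ^ 't)"

definition fnet :: "nat \<Rightarrow> ('t::finite) param \<Rightarrow> real \<Rightarrow> real ^ 't" where
  "fnet K \<theta> t = (case \<theta> of (v, w, b, a, c) \<Rightarrow>
      (\<Sum>k = 1..K. relu (w k * t + b k) *\<^sub>R v k) + t *\<^sub>R a + c)"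

definition cost :: "nat \<Rightarrow> ('t::finite) param \<Rightarrow> real" where
  "cost K \<theta> = (case \<theta> of (v, w, b, a, c) \<Rightarrow> (\<Sum>k = 1..K. norm (v k)))"

definition feasible :: "nat \<Rightarrow> nat \<Rightarrow> (nat \<Rightarrow> real) \<Rightarrow> (nat \<Rightarrow> real ^ 't) \<Rightarrow> ('t::finite) param \<Rightarrow> bool" where
  "feasible K N x y \<theta> \<longleftrightarrow>
     (case \<theta> of (v, w, b, a, c) \<Rightarrow> (\<forall>k \<in> {1..K}. \<bar>w k\<bar> = 1)) \<and>
     (\<forall>i \<in> {1..N}. fnet K \<theta> (x i) = y i)"

definition optimal :: "nat \<Rightarrow> nat \<Rightarrow> (nat \<Rightarrow> real) \<Rightarrow> (nat \<Rightarrow> real ^ 't) \<Rightarrow> ('t::finite) param \<Rightarrow> bool" where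
  "optimal K N x y \<theta> \<longleftrightarrow> feasible K N x y \<theta> \<and>
     (\<forall>\<theta>'. feasible K N x y \<theta>' \<longrightarrow> cost K \<theta> \<le> cost K \<theta>')"

definition is_solution :: "nat \<Rightarrow> nat \<Rightarrow> (nat \<Rightarrow> real) \<Rightarrow> (nat \<Rightarrow> real ^ 't) \<Rightarrow> (real \<Rightarrow> real ^ 't::finite) \<Rightarrow> bool" where
  "is_solution K N x y f \<longleftrightarrow> (\<exists>\<theta>. optimal K N x y \<theta> \<and> f = fnet K \<theta>)"

definition nonunique :: "nat \<Rightarrow> nat \<Rightarrow> (nat \<Rightarrow> real) \<Rightarrow> (nat \<Rightarrow> real ^ 't::finite) \<Rightarrow> bool" where
  "nonunique K N x y \<longleftrightarrow>
     (\<exists>\<theta> \<theta>'. optimal K N x y \<theta> \<and> optimal K N x y \<theta>' \<and> fnet K \<theta> \<noteq> fnet K \<theta>')"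

definition slope :: "(nat \<Rightarrow> real) \<Rightarrow> (nat \<Rightarrow> real ^ 't::finite) \<Rightarrow> nat \<Rightarrow> real ^ 't" where
  "slope x y i = (1 / (x (Suc i) - x i)) *\<^sub>R (y (Suc i) - y i)"

text \<open>Connect-the-dots interpolant (for N >= 2): on [x_i, x_{i+1}] it is the linear
  interpolant, on (-inf, x_2] it has slope s_1, on [x_{N-1}, inf) slope s_{N-1}.\<close>
definition connect_dots :: "nat \<Rightarrow> (nat \<Rightarrow> real) \<Rightarrow> (nat \<Rightarrow> real ^ 't::finite) \<Rightarrow> real \<Rightarrow> real ^ 't" where
  "connect_dots N x y t =
     (let i = (if t \<le> x 1 then 1 else Max {j \<in> {1..N-1}. x j \<le> t})
      in y i + (t - x i) *\<^sub>R slope x y i)"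

definition aligned :: "real ^ 't::finite \<Rightarrow> real ^ 't \<Rightarrow> bool" where
  "aligned u1 u2 \<longleftrightarrow> inner u1 u2 = norm u1 * norm u2"

definition alignment_condition :: "nat \<Rightarrow> (nat \<Rightarrow> real) \<Rightarrow> (nat \<Rightarrow> real ^ 't::finite) \<Rightarrow> bool" where
  "alignment_condition N x y \<longleftrightarrow>
     (\<exists>i \<in> {2..N-2}.
        slope x y i - slope x y (i - 1) \<noteq> 0 \<and>
        slope x y (Suc i) - slope x y i \<noteq> 0 \<and>
        aligned (slope x y i - slope x y (i - 1)) (slope x y (Suc i) - slope x y i))"

definition strictly_sorted :: "nat \<Rightarrow> (nat \<Rightarrow> real) \<Rightarrow> bool" where
  "strictly_sorted N x \<longleftrightarrow> (\<forall>i \<in> {1..N}. \<forall>j \<in> {1..N}. i < j \<longrightarrow> x i < x j)"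

definition data_measure :: "nat \<Rightarrow> ((nat \<Rightarrow> real) \<times> (nat \<Rightarrow> real ^ 't::finite)) measure" where
  "data_measure N = (\<Pi>\<^sub>M i\<in>{1..N}. lborel) \<Otimes>\<^sub>M (\<Pi>\<^sub>M i\<in>{1..N}. lborel)"

end

theory Submission
  imports Defs
begin
definition ns :: "(nat \<Rightarrow> real) \<Rightarrow> real \<Rightarrow> real \<Rightarrow> nat \<Rightarrow> real" where
  "ns x w b i = (relu (w * x (Suc i) + b) - relu (w * x i + b)) / (x (Suc i) - x i)"

definition hk :: "(nat \<Rightarrow> real) \<Rightarrow> real \<Rightarrow> real \<Rightarrow> nat \<Rightarrow> real" where
  "hk x w b i = ns x w b i - ns x w b (i - 1)"

definition dd :: "(nat \<Rightarrow> real) \<Rightarrow> (nat \<Rightarrow> real ^ 't::finite) \<Rightarrow> nat \<Rightarrow> real ^ 't" where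
  "dd x y i = slope x y i - slope x y (i - 1)"

lemma slope_fnet:
  assumes "feasible K N x y (v, w, b, a, c)" "1 \<le> i" "Suc i \<le> N" "x i \<noteq> x (Suc i)"
  shows "slope x y i = (\<Sum>k=1..K. ns x (w k) (b k) i *\<^sub>R v k) + a"
proof -
  have yi: "y i = fnet K (v, w, b, a, c) (x i)" and yi1: "y (Suc i) = fnet K (v, w, b, a, c) (x (Suc i))"
    using assms unfolding feasible_def by auto
  have h: "x (Suc i) - x i \<noteq> 0" using assms(4) by simp
  have "y (Suc i) - y i = (\<Sum>k=1..K. (relu (w k * x (Suc i) + b k) - relu (w k * x i + b k)) *\<^sub>R v k)
     + (x (Suc i) - x i) *\<^sub>R a"
    unfolding yi yi1 fnet_def by (simp add: algebra_simps sum_subtractf scaleR_left_diff_distrib)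
  then show ?thesis unfolding slope_def ns_def using h
    by (simp add: scaleR_sum_right scaleR_add_right divide_inverse_commute)
qed

definition sig :: "real \<Rightarrow> real \<Rightarrow> real \<Rightarrow> real" where
  "sig u v p = (relu (v - p) - relu (u - p)) / (v - u)"

lemma sig_eq: "u < v \<Longrightarrow> sig u v p = (if p \<le> u then 1 else if v \<le> p then 0 else (v - p) / (v - u))"
  unfolding sig_def relu_def by (auto simp: max_def field_simps)

lemma sig_ge0: "u < v \<Longrightarrow> 0 \<le> sig u v p"
  by (simp add: sig_eq)

lemma sig_le1: "u < v \<Longrightarrow> sig u v p \<le> 1"
  by (simp add: sig_eq)

lemma sig_mono: "a < b \<Longrightarrow> b < c \<Longrightarrow> sig a b p \<le> sig b c p"
  using sig_ge0[of a b p] sig_le1[of b c p] by (auto simp: sig_eq)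

lemma sig_pos: "a < p \<Longrightarrow> p < b \<Longrightarrow> 0 < sig a b p \<and> sig a b p < 1"
  by (simp add: sig_eq)

lemma sig_1: "p \<le> a \<Longrightarrow> a < b \<Longrightarrow> sig a b p = 1"
  by (simp add: sig_eq)

lemma sig_0: "b \<le> p \<Longrightarrow> a < b \<Longrightarrow> sig a b p = 0"
  by (simp add: sig_eq)

lemma sig_1_iff: "a < b \<Longrightarrow> sig a b p = 1 \<longleftrightarrow> p \<le> a"
  by (auto simp: sig_eq)

lemma sig_0_iff: "a < b \<Longrightarrow> sig a b p = 0 \<longleftrightarrow> b \<le> p"
  by (auto simp: sig_eq)

lemma relu_neg: "relu (- t) = relu t - t"
  unfolding relu_def by auto

lemma ns_sig:
  assumes "\<bar>w\<bar> = 1" "x i \<noteq> x (Suc i)"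
  shows "ns x w b i = sig (x i) (x (Suc i)) (- w * b) - (if w = -1 then 1 else 0)"
proof (cases "w = 1")
  case True
  then show ?thesis unfolding ns_def sig_def by (simp add: add.commute)
next
  case False
  then have w: "w = -1" using assms by auto
  have e: "\<And>t. relu (b - t) = relu (t - b) - (t - b)"
    using relu_neg by (metis minus_diff_eq)
  show ?thesis unfolding ns_def sig_def w using assms(2)
    by (simp add: e field_simps)
qed

lemma hk_sig:
  assumes "\<bar>w\<bar> = 1" "x (i - 1) \<noteq> x i" "x i \<noteq> x (Suc i)" "i \<ge> 1"
  shows "hk x w b i = sig (x i) (x (Suc i)) (- w * b) - sig (x (i - 1)) (x i) (- w * b)"
proof -
  have "Suc (i - 1) = i" using assms by simp
  then show ?thesis unfolding hk_def using ns_sig[OF assms(1) assms(3)] ns_sig[OF assms(1), of x "i - 1"] assms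
    by simp
qed

definition LB :: "nat \<Rightarrow> (nat \<Rightarrow> real) \<Rightarrow> (nat \<Rightarrow> real ^ 't::finite) \<Rightarrow> real" where
  "LB N x y = (\<Sum>i = 2..N - 1. norm (dd x y i))"

lemma ss_lt: "strictly_sorted N x \<Longrightarrow> 1 \<le> i \<Longrightarrow> i < j \<Longrightarrow> j \<le> N \<Longrightarrow> x i < x j"
  unfolding strictly_sorted_def by auto

lemma ss_le: "strictly_sorted N x \<Longrightarrow> 1 \<le> i \<Longrightarrow> i \<le> j \<Longrightarrow> j \<le> N \<Longrightarrow> x i \<le> x j"
  using ss_lt[of N x i j] by (cases "i = j") auto

lemma feasible_w: "feasible K N x y (v, w, b, a, c) \<Longrightarrow> k \<in> {1..K} \<Longrightarrow> \<bar>w k\<bar> = 1"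
  unfolding feasible_def by auto

lemma dd_fnet:
  assumes f: "feasible K N x y (v, w, b, a, c)" and s: "strictly_sorted N x" and i: "2 \<le> i" "i \<le> N - 1"
  shows "dd x y i = (\<Sum>k=1..K. hk x (w k) (b k) i *\<^sub>R v k)"
proof -
  have e: "Suc (i - 1) = i" using i by simp
  have 1: "slope x y i = (\<Sum>k=1..K. ns x (w k) (b k) i *\<^sub>R v k) + a"
  proof -
    have "Suc i \<le> N" using i by auto
    then show ?thesis using slope_fnet[OF f, of i] ss_lt[OF s, of i "Suc i"] i by force
  qed
  have 2: "slope x y (i - 1) = (\<Sum>k=1..K. ns x (w k) (b k) (i - 1) *\<^sub>R v k) + a"
  proof -
    have l: "x (i - 1) < x i" by (rule ss_lt[OF s]) (use i in auto)
    have h: "1 \<le> i - 1" "Suc (i - 1) \<le> N" "x (i - 1) \<noteq> x (Suc (i - 1))"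
      using l i e by auto
    show ?thesis using slope_fnet[OF f h] .
  qed
  show ?thesis unfolding dd_def 1 2 hk_def
    by (simp add: scaleR_left_diff_distrib sum_subtractf)
qed

lemma hk_nonneg:
  assumes f: "feasible K N x y (v, w, b, a, c)" and s: "strictly_sorted N x" and i: "2 \<le> i" "i \<le> N - 1"
    and k: "k \<in> {1..K}"
  shows "0 \<le> hk x (w k) (b k) i"
proof -
  have e: "Suc (i - 1) = i" using i by simp
  have l1: "x (i - 1) < x i" using ss_lt[OF s, of "i - 1" i] i by auto
  have l2: "x i < x (Suc i)" using ss_lt[OF s, of i "Suc i"] i by auto
  show ?thesis using hk_sig[OF feasible_w[OF f k], of x i] l1 l2 i sig_mono[OF l1 l2] by auto
qed

lemma Hsum:
  assumes f: "feasible K N x y (v, w, b, a, c)" and s: "strictly_sorted N x" and N: "N \<ge> 2"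
    and k: "k \<in> {1..K}"
  shows "(\<Sum>i=2..N - 1. hk x (w k) (b k) i)
     = sig (x (N - 1)) (x N) (- w k * b k) - sig (x 1) (x 2) (- w k * b k)"
proof -
  have "(\<Sum>i=2..N - 1. hk x (w k) (b k) i) = (\<Sum>i=Suc 1..N - 1. ns x (w k) (b k) i - ns x (w k) (b k) (i - 1))"
    unfolding hk_def by (simp add: numeral_2_eq_2)
  also have "\<dots> = ns x (w k) (b k) (N - 1) - ns x (w k) (b k) 1"
    by (rule sum_telescope'') (use N in auto)
  also have "\<dots> = sig (x (N - 1)) (x N) (- w k * b k) - sig (x 1) (x 2) (- w k * b k)"
  proof -
    have a1: "x (N - 1) < x (Suc (N - 1))" using ss_lt[OF s, of "N - 1" N] N by auto
    have a2: "x 1 \<noteq> x (Suc 1)" using ss_lt[OF s, of 1 "Suc 1"] N by auto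
    have e: "Suc (N - 1) = N" using N by auto
    have b1: "ns x (w k) (b k) (N - 1) = sig (x (N - 1)) (x N) (- w k * b k) - (if w k = -1 then 1 else 0)"
      using ns_sig[OF feasible_w[OF f k], of x "N - 1"] a1 e by auto
    have b2: "ns x (w k) (b k) 1 = sig (x 1) (x (Suc 1)) (- w k * b k) - (if w k = -1 then 1 else 0)"
      using ns_sig[OF feasible_w[OF f k], of x 1] a2 by blast
    show ?thesis unfolding b1 b2 by (simp add: numeral_2_eq_2)
  qed
  finally show ?thesis .
qed

lemma Hsum_le1:
  assumes f: "feasible K N x y (v, w, b, a, c)" and s: "strictly_sorted N x" and N: "N \<ge> 2"
    and k: "k \<in> {1..K}"
  shows "(\<Sum>i=2..N - 1. hk x (w k) (b k) i) \<le> 1"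
proof -
  have a1: "x (N - 1) < x N" using ss_lt[OF s, of "N - 1" N] N by auto
  have a2: "x 1 < x 2" using ss_lt[OF s, of 1 2] N by auto
  show ?thesis unfolding Hsum[OF f s N k] using sig_le1[OF a1] sig_ge0[OF a2] by smt
qed

lemma key_decomp:
  assumes f: "feasible K N x y (v, w, b, a, c)" and s: "strictly_sorted N x" and N: "N \<ge> 2"
  shows "cost K (v, w, b, a, c) = LB N x y
     + (\<Sum>i=2..N - 1. (\<Sum>k=1..K. hk x (w k) (b k) i * norm (v k)) - norm (dd x y i))
     + (\<Sum>k=1..K. (1 - (\<Sum>i=2..N - 1. hk x (w k) (b k) i)) * norm (v k))"
proof -
  have "(\<Sum>i=2..N - 1. (\<Sum>k=1..K. hk x (w k) (b k) i * norm (v k)))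
      = (\<Sum>k=1..K. (\<Sum>i=2..N - 1. hk x (w k) (b k) i) * norm (v k))"
    by (subst sum.swap) (simp add: sum_distrib_right)
  then show ?thesis unfolding cost_def LB_def
    by (simp add: sum_subtractf algebra_simps)
qed

lemma A_nonneg:
  assumes f: "feasible K N x y (v, w, b, a, c)" and s: "strictly_sorted N x" and i: "2 \<le> i" "i \<le> N - 1"
  shows "norm (dd x y i) \<le> (\<Sum>k=1..K. hk x (w k) (b k) i * norm (v k))"
proof -
  have "norm (dd x y i) \<le> (\<Sum>k=1..K. norm (hk x (w k) (b k) i *\<^sub>R v k))"
    unfolding dd_fnet[OF f s i] by (rule norm_sum)
  also have "\<dots> = (\<Sum>k=1..K. hk x (w k) (b k) i * norm (v k))"
    by (rule sum.cong) (use hk_nonneg[OF f s i] in auto)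
  finally show ?thesis .
qed

lemma B_nonneg:
  assumes f: "feasible K N x y (v, w, b, a, c)" and s: "strictly_sorted N x" and N: "N \<ge> 2"
    and k: "k \<in> {1..K}"
  shows "0 \<le> (1 - (\<Sum>i=2..N - 1. hk x (w k) (b k) i)) * norm (v k)"
  using Hsum_le1[OF f s N k] by simp

lemma lower_bound:
  assumes f: "feasible K N x y \<theta>" and s: "strictly_sorted N x" and N: "N \<ge> 2"
  shows "LB N x y \<le> cost K \<theta>"
proof -
  obtain v w b a c where th: "\<theta> = (v, w, b, a, c)" by (cases \<theta>) auto
  show ?thesis using f unfolding th
    apply (subst key_decomp[OF f[unfolded th] s N])
    using A_nonneg[OF f[unfolded th] s] B_nonneg[OF f[unfolded th] s N]
    by (smt (verit, best) atLeastAtMost_iff sum_nonneg)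
qed

definition EE :: "nat \<Rightarrow> (nat \<Rightarrow> real) \<Rightarrow> (nat \<Rightarrow> real ^ 't::finite) \<Rightarrow> real \<Rightarrow> real ^ 't" where
  "EE N x y t = y 1 + (t - x 1) *\<^sub>R slope x y 1 + (\<Sum>j=2..N - 1. relu (t - x j) *\<^sub>R dd x y j)"

lemma tel:
  assumes s: "strictly_sorted N x" and i: "1 \<le> i" "i \<le> N - 1"
  shows "y 1 + (t - x 1) *\<^sub>R slope x y 1 + (\<Sum>j=2..i. (t - x j) *\<^sub>R dd x y j) = y i + (t - x i) *\<^sub>R slope x y i"
  using i
proof (induction i rule: dec_induct)
  case base
  then show ?case by simp
next
  case (step n)
  have h: "x n < x (Suc n)" by (rule ss_lt[OF s]) (use step in auto)
  have yS: "y (Suc n) = y n + (x (Suc n) - x n) *\<^sub>R slope x y n"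
    using h unfolding slope_def by simp
  have sm: "(\<Sum>j=2..Suc n. (t - x j) *\<^sub>R dd x y j) = (\<Sum>j=2..n. (t - x j) *\<^sub>R dd x y j) + (t - x (Suc n)) *\<^sub>R dd x y (Suc n)"
    using step(1) by (simp add: sum.cl_ivl_Suc)
  have IH: "y 1 + (t - x 1) *\<^sub>R slope x y 1 + (\<Sum>j=2..n. (t - x j) *\<^sub>R dd x y j) = y n + (t - x n) *\<^sub>R slope x y n"
    by (rule step(3)) (use step in linarith)
  have dS: "dd x y (Suc n) = slope x y (Suc n) - slope x y n" unfolding dd_def by simp
  have g: "\<And>(A::real^'t) B S Y Z. A + S = Y + (t - x n) *\<^sub>R Z \<Longrightarrow>
     A + (S + (t - x (Suc n)) *\<^sub>R (B - Z)) = (Y + (x (Suc n) - x n) *\<^sub>R Z) + (t - x (Suc n)) *\<^sub>R B"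
    by (simp add: algebra_simps)
  show ?case unfolding sm yS dS add.assoc[symmetric, of "y 1"] using g[OF IH] by (simp add: add.assoc)
qed

lemma EE_on:
  assumes s: "strictly_sorted N x" and i: "1 \<le> i" "i \<le> N - 1" and t: "x i \<le> t" "i < N - 1 \<Longrightarrow> t \<le> x (Suc i)"
  shows "EE N x y t = y i + (t - x i) *\<^sub>R slope x y i"
proof -
  have split: "{2..N - 1} = {2..i} \<union> {Suc i..N - 1}" using i by auto
  have z: "(\<Sum>j\<in>{Suc i..N - 1}. relu (t - x j) *\<^sub>R dd x y j) = 0"
  proof (rule sum.neutral, clarify)
    fix j assume j: "j \<in> {Suc i..N - 1}"
    then have "i < N - 1" by auto
    then have "t \<le> x (Suc i)" using t by auto
    also have "x (Suc i) \<le> x j" by (rule ss_le[OF s]) (use j in auto)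
    finally show "relu (t - x j) *\<^sub>R dd x y j = 0" unfolding relu_def by simp
  qed
  have p: "(\<Sum>j\<in>{2..i}. relu (t - x j) *\<^sub>R dd x y j) = (\<Sum>j\<in>{2..i}. (t - x j) *\<^sub>R dd x y j)"
  proof (rule sum.cong, simp)
    fix j assume j: "j \<in> {2..i}"
    have "x j \<le> x i" by (rule ss_le[OF s]) (use j i in auto)
    then show "relu (t - x j) *\<^sub>R dd x y j = (t - x j) *\<^sub>R dd x y j" unfolding relu_def using t by simp
  qed
  have "EE N x y t = y 1 + (t - x 1) *\<^sub>R slope x y 1 + (\<Sum>j=2..i. (t - x j) *\<^sub>R dd x y j)"
  proof -
    have "(\<Sum>j\<in>{2..N - 1}. relu (t - x j) *\<^sub>R dd x y j) = (\<Sum>j\<in>{2..i}. relu (t - x j) *\<^sub>R dd x y j) + (\<Sum>j\<in>{Suc i..N - 1}. relu (t - x j) *\<^sub>R dd x y j)"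
      unfolding split by (rule sum.union_disjoint) auto
    then show ?thesis unfolding EE_def z p by simp
  qed
  then show ?thesis using tel[OF s i] by simp
qed

lemma EE_left:
  assumes s: "strictly_sorted N x" and N: "N \<ge> 2" and t: "t \<le> x 1"
  shows "EE N x y t = y 1 + (t - x 1) *\<^sub>R slope x y 1"
proof -
  have "(\<Sum>j=2..N - 1. relu (t - x j) *\<^sub>R dd x y j) = 0"
  proof (rule sum.neutral, clarify)
    fix j assume j: "j \<in> {2..N - 1}"
    have "x 1 \<le> x j" by (rule ss_le[OF s]) (use j in auto)
    then show "relu (t - x j) *\<^sub>R dd x y j = 0" unfolding relu_def using t by simp
  qed
  then show ?thesis unfolding EE_def by simp
qed

lemma EE_interp:
  assumes s: "strictly_sorted N x" and N: "N \<ge> 2" and j: "j \<in> {1..N}"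
  shows "EE N x y (x j) = y j"
proof (cases "j = N")
  case True
  have h: "x (N - 1) < x N" by (rule ss_lt[OF s]) (use N in auto)
  have e: "Suc (N - 1) = N" using N by simp
  have "EE N x y (x N) = y (N - 1) + (x N - x (N - 1)) *\<^sub>R slope x y (N - 1)"
    by (rule EE_on[OF s]) (use N h in auto)
  also have "\<dots> = y N" unfolding slope_def e using h by simp
  finally show ?thesis using True by simp
next
  case False
  show ?thesis
    by (subst EE_on[OF s, of j]) (use j False ss_le[OF s, of j "Suc j"] in auto)
qed

lemma connect_EE:
  assumes s: "strictly_sorted N x" and N: "N \<ge> 2"
  shows "connect_dots N x y t = EE N x y t"
proof (cases "t \<le> x 1")
  case True
  have "connect_dots N x y t = y 1 + (t - x 1) *\<^sub>R slope x y 1" unfolding connect_dots_def using True by simp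
  then show ?thesis using EE_left[OF s N True, of y] by simp
next
  case False
  define S where "S = {j \<in> {1..N - 1}. x j \<le> t}"
  define i where "i = Max S"
  have fS: "finite S" unfolding S_def by auto
  have 1: "1 \<in> S" unfolding S_def using False N by auto
  have iS: "i \<in> S" unfolding i_def using fS 1 Max_in by blast
  have iM: "\<And>j. j \<in> S \<Longrightarrow> j \<le> i" unfolding i_def using fS by auto
  have c: "connect_dots N x y t = y i + (t - x i) *\<^sub>R slope x y i"
    unfolding connect_dots_def i_def S_def using False by (simp add: Let_def)
  have nx: "i < N - 1 \<Longrightarrow> t \<le> x (Suc i)"
  proof (rule ccontr)
    assume a: "i < N - 1" "\<not> t \<le> x (Suc i)"
    then have "Suc i \<in> S" unfolding S_def by auto
    then show False using iM by fastforce
  qed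
  show ?thesis unfolding c
    by (rule EE_on[OF s, symmetric]) (use iS nx in \<open>auto simp: S_def\<close>)
qed

definition cd_net :: "nat \<Rightarrow> (nat \<Rightarrow> real) \<Rightarrow> (nat \<Rightarrow> real ^ 't::finite) \<Rightarrow> 't param" where
  "cd_net N x y = (\<lambda>k. if k \<in> {2..N - 1} then dd x y k else 0, \<lambda>k. 1,
      \<lambda>k. if k \<in> {2..N - 1} then - x k else 0, slope x y 1, y 1 - x 1 *\<^sub>R slope x y 1)"

lemma fnet_cd:
  assumes N: "N \<ge> 2" and K: "K \<ge> N - 1"
  shows "fnet K (cd_net N x y) t = EE N x y t"
proof -
  have sub: "{2..N - 1} \<subseteq> {1..K}" using K by auto
  have "(\<Sum>k = 1..K. relu (1 * t + (if k \<in> {2..N - 1} then - x k else 0)) *\<^sub>R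
           (if k \<in> {2..N - 1} then dd x y k else 0))
      = (\<Sum>k = 2..N - 1. relu (1 * t + (if k \<in> {2..N - 1} then - x k else 0)) *\<^sub>R
           (if k \<in> {2..N - 1} then dd x y k else 0))"
    by (rule sum.mono_neutral_right) (use sub in auto)
  also have "\<dots> = (\<Sum>j=2..N - 1. relu (t - x j) *\<^sub>R dd x y j)"
    by (rule sum.cong) auto
  finally have S: "(\<Sum>k = 1..K. relu (1 * t + (if k \<in> {2..N - 1} then - x k else 0)) *\<^sub>R
           (if k \<in> {2..N - 1} then dd x y k else 0)) = (\<Sum>j=2..N - 1. relu (t - x j) *\<^sub>R dd x y j)" .
  have g: "\<And>S (a :: real ^ 't) y0 x0. S + t *\<^sub>R a + (y0 - x0 *\<^sub>R a) = y0 + (t - x0) *\<^sub>R a + S"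
    by (simp add: algebra_simps)
  show ?thesis unfolding fnet_def cd_net_def EE_def prod.case S by (rule g)
qed

lemma cost_cd: "K \<ge> N - 1 \<Longrightarrow> cost K (cd_net N x y) = LB N x y"
proof -
  assume K: "K \<ge> N - 1"
  have sub: "{2..N - 1} \<subseteq> {1..K}" using K by auto
  have "(\<Sum>k = 1..K. norm (if k \<in> {2..N - 1} then dd x y k else 0))
      = (\<Sum>k = 2..N - 1. norm (if k \<in> {2..N - 1} then dd x y k else 0))"
    by (rule sum.mono_neutral_right) (use sub in auto)
  also have "\<dots> = (\<Sum>k = 2..N - 1. norm (dd x y k))" by (rule sum.cong) auto
  finally show ?thesis unfolding cost_def cd_net_def LB_def prod.case .
qed

lemma feasible_cd:
  assumes s: "strictly_sorted N x" and N: "N \<ge> 2" and K: "K \<ge> N - 1"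
  shows "feasible K N x y (cd_net N x y)"
  unfolding feasible_def
proof (intro conjI ballI)
  fix i assume i: "i \<in> {1..N}"
  show "fnet K (cd_net N x y) (x i) = y i" unfolding fnet_cd[OF N K] by (rule EE_interp[OF s N i])
qed (auto simp: cd_net_def)

lemma optimal_cd:
  assumes s: "strictly_sorted N x" and N: "N \<ge> 2" and K: "K \<ge> N - 1"
  shows "optimal K N x y (cd_net N x y)"
  unfolding optimal_def
proof (intro conjI allI impI)
  show "feasible K N x y (cd_net N x y)" by (rule feasible_cd[OF s N K])
  fix th assume "feasible K N x y th"
  then show "cost K (cd_net N x y) \<le> cost K th" unfolding cost_cd[OF K] by (rule lower_bound[OF _ s N])
qed

lemma sol_cd:
  assumes s: "strictly_sorted N x" and N: "N \<ge> 2" and K: "K \<ge> N - 1"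
  shows "is_solution K N x y (connect_dots N x y)"
  unfolding is_solution_def
proof (intro exI conjI)
  show "optimal K N x y (cd_net N x y)" by (rule optimal_cd[OF s N K])
  show "connect_dots N x y = fnet K (cd_net N x y)"
    by (rule ext) (simp add: fnet_cd[OF N K] connect_EE[OF s N])
qed

lemma interval_ex:
  assumes s: "strictly_sorted N x" and N: "N \<ge> 2" and t: "x 1 < t"
  shows "\<exists>i. 1 \<le> i \<and> i \<le> N - 1 \<and> x i \<le> t \<and> (i < N - 1 \<longrightarrow> t \<le> x (Suc i))"
proof -
  define S where "S = {j \<in> {1..N - 1}. x j \<le> t}"
  define i where "i = Max S"
  have fS: "finite S" unfolding S_def by auto
  have 1: "1 \<in> S" unfolding S_def using t N by auto
  have iS: "i \<in> S" unfolding i_def using fS 1 Max_in by blast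
  have iM: "\<And>j. j \<in> S \<Longrightarrow> j \<le> i" unfolding i_def using fS by auto
  have nx: "i < N - 1 \<Longrightarrow> t \<le> x (Suc i)"
  proof (rule ccontr)
    assume a: "i < N - 1" "\<not> t \<le> x (Suc i)"
    then have "Suc i \<in> S" unfolding S_def by auto
    then show False using iM by fastforce
  qed
  show ?thesis using iS nx unfolding S_def by auto
qed

lemma align_from_eq:
  fixes v :: "nat \<Rightarrow> 'a::real_inner"
  assumes fin: "finite S" and nn: "\<And>k. k \<in> S \<Longrightarrow> 0 \<le> \<alpha> k"
    and d: "d = (\<Sum>k\<in>S. \<alpha> k *\<^sub>R v k)" and eq: "norm d = (\<Sum>k\<in>S. \<alpha> k * norm (v k))"
    and k0: "k0 \<in> S" "0 < \<alpha> k0" "v k0 \<noteq> 0"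
  shows "d \<noteq> 0 \<and> inner d (v k0) = norm d * norm (v k0)"
proof
  show d0: "d \<noteq> 0"
  proof
    assume "d = 0"
    then have "(\<Sum>k\<in>S. \<alpha> k * norm (v k)) = 0" using eq by simp
    then have "\<alpha> k0 * norm (v k0) = 0"
    proof -
      have nn3: "\<And>k. k \<in> S \<Longrightarrow> 0 \<le> \<alpha> k * norm (v k)" using nn by simp
      show ?thesis using iffD1[OF sum_nonneg_eq_0_iff[OF fin nn3] \<open>(\<Sum>k\<in>S. \<alpha> k * norm (v k)) = 0\<close>] k0(1) by blast
    qed
    then show False using k0 by simp
  qed
  have e2: "inner d d = (\<Sum>k\<in>S. \<alpha> k * inner d (v k))"
    by (subst (2) d) (simp add: inner_sum_right)
  have e1: "(\<Sum>k\<in>S. \<alpha> k * (norm d * norm (v k) - inner d (v k)))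
      = norm d * (\<Sum>k\<in>S. \<alpha> k * norm (v k)) - (\<Sum>k\<in>S. \<alpha> k * inner d (v k))"
    by (simp add: algebra_simps sum_subtractf sum_distrib_left)
  have z: "(\<Sum>k\<in>S. \<alpha> k * (norm d * norm (v k) - inner d (v k))) = 0"
    unfolding e1 e2[symmetric] eq[symmetric] by (simp add: power2_norm_eq_inner[symmetric] power2_eq_square)
  have nn2: "\<And>k. k \<in> S \<Longrightarrow> 0 \<le> \<alpha> k * (norm d * norm (v k) - inner d (v k))"
    using nn norm_cauchy_schwarz[of d] by (simp add: mult_nonneg_nonneg)
  have "\<alpha> k0 * (norm d * norm (v k0) - inner d (v k0)) = 0"
    using iffD1[OF sum_nonneg_eq_0_iff[OF fin nn2] z] k0(1) by blast
  then show "inner d (v k0) = norm d * norm (v k0)" using k0 by simp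
qed

lemma aligned_trans:
  fixes u :: "real ^ 't::finite"
  assumes "inner d1 u = norm d1 * norm u" "inner d2 u = norm d2 * norm u" "u \<noteq> 0"
  shows "aligned d1 d2"
proof -
  have 1: "norm d1 *\<^sub>R u = norm u *\<^sub>R d1" using assms(1) norm_cauchy_schwarz_eq by blast
  have 2: "norm d2 *\<^sub>R u = norm u *\<^sub>R d2" using assms(2) norm_cauchy_schwarz_eq by blast
  have nu: "norm u \<noteq> 0" using assms(3) by simp
  have "norm d1 *\<^sub>R d2 = norm d2 *\<^sub>R d1"
  proof -
    have "norm u *\<^sub>R (norm d1 *\<^sub>R d2) = norm d1 *\<^sub>R (norm u *\<^sub>R d2)" by (simp add: scaleR_scaleR mult.commute)
    also have "\<dots> = norm d1 *\<^sub>R (norm d2 *\<^sub>R u)" using 2 by simp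
    also have "\<dots> = norm d2 *\<^sub>R (norm d1 *\<^sub>R u)" by (simp add: scaleR_scaleR mult.commute)
    also have "\<dots> = norm d2 *\<^sub>R (norm u *\<^sub>R d1)" using 1 by simp
    also have "\<dots> = norm u *\<^sub>R (norm d2 *\<^sub>R d1)" by (simp add: scaleR_scaleR mult.commute)
    finally have "norm u *\<^sub>R (norm d1 *\<^sub>R d2) = norm u *\<^sub>R (norm d2 *\<^sub>R d1)" .
    then show ?thesis using nu by (metis scaleR_cancel_left)
  qed
  then show ?thesis unfolding aligned_def using norm_cauchy_schwarz_eq by blast
qed

lemma opt_eqs:
  assumes o: "optimal K N x y (v, w, b, a, c)" and s: "strictly_sorted N x" and N: "N \<ge> 2" and K: "K \<ge> N - 1"
  shows "\<And>i. i \<in> {2..N - 1} \<Longrightarrow> norm (dd x y i) = (\<Sum>k=1..K. hk x (w k) (b k) i * norm (v k))"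
    and "\<And>k. k \<in> {1..K} \<Longrightarrow> (1 - (\<Sum>i=2..N - 1. hk x (w k) (b k) i)) * norm (v k) = 0"
proof -
  have f: "feasible K N x y (v, w, b, a, c)" using o unfolding optimal_def by auto
  have "cost K (v, w, b, a, c) \<le> LB N x y"
    using o feasible_cd[OF s N K] cost_cd[OF K] unfolding optimal_def by metis
  then have le: "(\<Sum>i=2..N - 1. (\<Sum>k=1..K. hk x (w k) (b k) i * norm (v k)) - norm (dd x y i))
     + (\<Sum>k=1..K. (1 - (\<Sum>i=2..N - 1. hk x (w k) (b k) i)) * norm (v k)) \<le> 0"
    using key_decomp[OF f s N] by simp
  have A: "\<And>i. i \<in> {2..N - 1} \<Longrightarrow> 0 \<le> (\<Sum>k=1..K. hk x (w k) (b k) i * norm (v k)) - norm (dd x y i)"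
    using A_nonneg[OF f s] by auto
  have B: "\<And>k. k \<in> {1..K} \<Longrightarrow> 0 \<le> (1 - (\<Sum>i=2..N - 1. hk x (w k) (b k) i)) * norm (v k)"
    using B_nonneg[OF f s N] by auto
  have X0: "0 \<le> (\<Sum>i=2..N - 1. (\<Sum>k=1..K. hk x (w k) (b k) i * norm (v k)) - norm (dd x y i))"
    by (rule sum_nonneg) (rule A)
  have Y0: "0 \<le> (\<Sum>k=1..K. (1 - (\<Sum>i=2..N - 1. hk x (w k) (b k) i)) * norm (v k))"
    by (rule sum_nonneg) (rule B)
  have sA: "(\<Sum>i=2..N - 1. (\<Sum>k=1..K. hk x (w k) (b k) i * norm (v k)) - norm (dd x y i)) = 0"
    using le X0 Y0 by linarith
  have sB: "(\<Sum>k=1..K. (1 - (\<Sum>i=2..N - 1. hk x (w k) (b k) i)) * norm (v k)) = 0"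
    using le X0 Y0 by linarith
  have allA: "\<forall>i\<in>{2..N - 1}. (\<Sum>k=1..K. hk x (w k) (b k) i * norm (v k)) - norm (dd x y i) = 0"
    using iffD1[OF sum_nonneg_eq_0_iff[OF _ A] sA] by simp
  have allB: "\<forall>k\<in>{1..K}. (1 - (\<Sum>i=2..N - 1. hk x (w k) (b k) i)) * norm (v k) = 0"
    using iffD1[OF sum_nonneg_eq_0_iff[OF _ B] sB] by simp
  show "\<And>i. i \<in> {2..N - 1} \<Longrightarrow> norm (dd x y i) = (\<Sum>k=1..K. hk x (w k) (b k) i * norm (v k))"
    using allA by simp
  show "\<And>k. k \<in> {1..K} \<Longrightarrow> (1 - (\<Sum>i=2..N - 1. hk x (w k) (b k) i)) * norm (v k) = 0"
    using allB by blast
qed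

lemma kink_loc:
  assumes o: "optimal K N x y (v, w, b, a, c)" and s: "strictly_sorted N x" and N: "N \<ge> 2" and K: "K \<ge> N - 1"
    and na: "\<not> alignment_condition N x y" and k: "k \<in> {1..K}" and vk: "v k \<noteq> 0"
  shows "x 2 \<le> - w k * b k" "- w k * b k \<le> x (N - 1)"
    "\<And>i. i \<in> {1..N - 2} \<Longrightarrow> \<not> (x i < - w k * b k \<and> - w k * b k < x (Suc i))"
proof -
  define p where "p = - w k * b k"
  have f: "feasible K N x y (v, w, b, a, c)" using o unfolding optimal_def by auto
  have a1: "x (N - 1) < x N" by (rule ss_lt[OF s]) (use N in auto)
  have a2: "x 1 < x 2" by (rule ss_lt[OF s]) (use N in auto)
  have "(\<Sum>i=2..N - 1. hk x (w k) (b k) i) = 1" using opt_eqs(2)[OF o s N K k] vk by simp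
  then have e: "sig (x (N - 1)) (x N) p - sig (x 1) (x 2) p = 1" unfolding Hsum[OF f s N k] p_def .
  have "sig (x (N - 1)) (x N) p = 1" "sig (x 1) (x 2) p = 0"
    using e sig_le1[OF a1, of p] sig_ge0[OF a2, of p] by auto
  then show "x 2 \<le> - w k * b k" "- w k * b k \<le> x (N - 1)"
    using sig_1_iff[OF a1] sig_0_iff[OF a2] unfolding p_def by auto
  then have p2: "x 2 \<le> p" unfolding p_def by simp
  show "\<not> (x i < - w k * b k \<and> - w k * b k < x (Suc i))" if i: "i \<in> {1..N - 2}" for i
  proof
    assume "x i < - w k * b k \<and> - w k * b k < x (Suc i)"
    then have pi: "x i < p" "p < x (Suc i)" unfolding p_def by auto
    have i2: "i \<ge> 2"
    proof (rule ccontr)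
      assume "\<not> i \<ge> 2" then have "i = 1" using i by auto
      then show False using pi p2 by (simp add: numeral_2_eq_2)
    qed
    have l0: "x (i - 1) < x i" by (rule ss_lt[OF s]) (use i i2 in auto)
    have l1: "x i < x (Suc i)" by (rule ss_lt[OF s]) (use i in auto)
    have l2: "x (Suc i) < x (Suc (Suc i))" by (rule ss_lt[OF s]) (use i in auto)
    have w: "\<bar>w k\<bar> = 1" by (rule feasible_w[OF f k])
    have h1: "hk x (w k) (b k) i > 0"
      using hk_sig[OF w, of x i] l0 l1 i2 sig_pos[OF pi, of] sig_0[of "x i" p "x (i - 1)"] pi l0
      unfolding p_def by auto
    have h2: "hk x (w k) (b k) (Suc i) > 0"
      using hk_sig[OF w, of x "Suc i"] l1 l2 sig_pos[OF pi] sig_1[of p "x (Suc i)" "x (Suc (Suc i))"] pi l2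
      unfolding p_def by auto
    have iA: "i \<in> {2..N - 1}" "Suc i \<in> {2..N - 1}" using i i2 by auto
    have nn: "\<And>j k. j \<in> {2..N - 1} \<Longrightarrow> k \<in> {1..K} \<Longrightarrow> 0 \<le> hk x (w k) (b k) j"
      using hk_nonneg[OF f s] by auto
    have r1: "dd x y i \<noteq> 0 \<and> inner (dd x y i) (v k) = norm (dd x y i) * norm (v k)"
      by (rule align_from_eq[where \<alpha> = "\<lambda>k. hk x (w k) (b k) i" and S = "{1..K}"])
         (use nn iA dd_fnet[OF f s] opt_eqs(1)[OF o s N K] k h1 vk in auto)
    have r2: "dd x y (Suc i) \<noteq> 0 \<and> inner (dd x y (Suc i)) (v k) = norm (dd x y (Suc i)) * norm (v k)"
      by (rule align_from_eq[where \<alpha> = "\<lambda>k. hk x (w k) (b k) (Suc i)" and S = "{1..K}"])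
         (use nn iA dd_fnet[OF f s] opt_eqs(1)[OF o s N K] k h2 vk in auto)
    have "aligned (dd x y i) (dd x y (Suc i))" using r1 r2 aligned_trans vk by blast
    then have "alignment_condition N x y"
      unfolding alignment_condition_def using r1 r2 i i2 by (auto simp: dd_def)
    then show False using na by simp
  qed
qed

lemma aff_neuron:
  assumes w: "\<bar>w\<bar> = 1" and S: "(\<forall>t\<in>S. - w * b \<le> t) \<or> (\<forall>t\<in>S. t \<le> - w * b)"
  shows "\<exists>\<alpha> \<beta>. \<forall>t\<in>S. relu (w * t + b) = \<alpha> * t + \<beta>"
proof (cases "w = 1")
  case True
  show ?thesis
  proof (cases "\<forall>t\<in>S. - w * b \<le> t")
    case True
    then show ?thesis using \<open>w = 1\<close> by (intro exI[of _ 1] exI[of _ b]) (auto simp: relu_def)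
  next
    case False
    then show ?thesis using S \<open>w = 1\<close> by (intro exI[of _ 0] exI[of _ 0]) (auto simp: relu_def)
  qed
next
  case False
  then have w1: "w = -1" using w by auto
  show ?thesis
  proof (cases "\<forall>t\<in>S. - w * b \<le> t")
    case True
    then show ?thesis using w1 by (intro exI[of _ 0] exI[of _ 0]) (auto simp: relu_def)
  next
    case False
    then show ?thesis using S w1 by (intro exI[of _ "-1"] exI[of _ b]) (auto simp: relu_def)
  qed
qed

lemma aff_fnet:
  fixes v :: "nat \<Rightarrow> real ^ 't::finite"
  assumes h: "\<forall>k\<in>{1..K}. v k \<noteq> 0 \<longrightarrow> \<bar>w k\<bar> = 1 \<and>
      ((\<forall>t\<in>S. - w k * b k \<le> t) \<or> (\<forall>t\<in>S. t \<le> - w k * b k))"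
  shows "\<exists>A C. \<forall>t\<in>S. fnet K (v, w, b, a, c) t = t *\<^sub>R A + C"
proof -
  have "\<forall>k\<in>{1..K}. \<exists>AB :: (real^'t) \<times> (real^'t). \<forall>t\<in>S. relu (w k * t + b k) *\<^sub>R v k = t *\<^sub>R fst AB + snd AB"
  proof
    fix k assume k: "k \<in> {1..K}"
    show "\<exists>AB :: (real^'t) \<times> (real^'t). \<forall>t\<in>S. relu (w k * t + b k) *\<^sub>R v k = t *\<^sub>R fst AB + snd AB"
    proof (cases "v k = 0")
      case True
      then show ?thesis by (intro exI[of _ "(0, 0)"]) simp
    next
      case False
      then obtain \<alpha> \<beta> where ab: "\<forall>t\<in>S. relu (w k * t + b k) = \<alpha> * t + \<beta>"
        using aff_neuron[of "w k" S "b k"] h k by blast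
      show ?thesis
        by (intro exI[of _ "(\<alpha> *\<^sub>R v k, \<beta> *\<^sub>R v k)"]) (simp add: ab scaleR_add_left)
    qed
  qed
  then obtain AB :: "nat \<Rightarrow> (real^'t) \<times> (real^'t)" where
    AB: "\<forall>k\<in>{1..K}. \<forall>t\<in>S. relu (w k * t + b k) *\<^sub>R v k = t *\<^sub>R fst (AB k) + snd (AB k)"
    by metis
  show ?thesis
  proof (intro exI ballI)
    fix t assume t: "t \<in> S"
    have "(\<Sum>k = 1..K. relu (w k * t + b k) *\<^sub>R v k) = (\<Sum>k = 1..K. t *\<^sub>R fst (AB k) + snd (AB k))"
      by (rule sum.cong) (use AB t in auto)
    also have "\<dots> = t *\<^sub>R (\<Sum>k = 1..K. fst (AB k)) + (\<Sum>k = 1..K. snd (AB k))"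
      by (simp add: sum.distrib scaleR_sum_right)
    finally show "fnet K (v, w, b, a, c) t = t *\<^sub>R ((\<Sum>k = 1..K. fst (AB k)) + a) + ((\<Sum>k = 1..K. snd (AB k)) + c)"
      unfolding fnet_def prod.case by (simp add: algebra_simps)
  qed
qed

lemma aff_interp:
  fixes g :: "real \<Rightarrow> 'a::real_vector"
  assumes "\<forall>t\<in>S. g t = t *\<^sub>R A + C" "u1 \<in> S" "u2 \<in> S" "t \<in> S" "u1 \<noteq> u2"
  shows "g t = g u1 + ((t - u1) / (u2 - u1)) *\<^sub>R (g u2 - g u1)"
proof -
  have "g u2 - g u1 = (u2 - u1) *\<^sub>R A" using assms by (simp add: algebra_simps)
  then have "((t - u1) / (u2 - u1)) *\<^sub>R (g u2 - g u1) = (t - u1) *\<^sub>R A"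
    using assms(5) by simp
  then show ?thesis using assms by (simp add: algebra_simps)
qed

lemma interp_slope:
  assumes "g t = g (x i) + ((t - x i) / (x (Suc i) - x i)) *\<^sub>R (g (x (Suc i)) - g (x i))"
    "g (x i) = y i" "g (x (Suc i)) = y (Suc i)"
  shows "g t = y i + (t - x i) *\<^sub>R slope x y i"
  using assms unfolding slope_def by (simp add: divide_inverse_commute)

lemma unique_fnet:
  assumes o: "optimal K N x y \<theta>" and s: "strictly_sorted N x" and N: "N \<ge> 2" and K: "K \<ge> N - 1"
    and na: "\<not> alignment_condition N x y"
  shows "fnet K \<theta> = connect_dots N x y"
proof
  fix t
  obtain v w b a c where th: "\<theta> = (v, w, b, a, c)" by (cases \<theta>) auto
  have o': "optimal K N x y (v, w, b, a, c)" using o th by simp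
  have f: "feasible K N x y (v, w, b, a, c)" using o' unfolding optimal_def by auto
  have fy: "\<And>j. j \<in> {1..N} \<Longrightarrow> fnet K (v, w, b, a, c) (x j) = y j" using f unfolding feasible_def by auto
  have wk: "\<And>k. k \<in> {1..K} \<Longrightarrow> \<bar>w k\<bar> = 1" using feasible_w[OF f] by auto
  note kl = kink_loc[OF o' s N K na]
  show "fnet K \<theta> t = connect_dots N x y t"
  proof (cases "t \<le> x 1")
    case True
    have cd: "connect_dots N x y t = y 1 + (t - x 1) *\<^sub>R slope x y 1" unfolding connect_dots_def using True by simp
    have "\<exists>A C. \<forall>t\<in>{..x (Suc 1)}. fnet K (v, w, b, a, c) t = t *\<^sub>R A + C"
    proof (rule aff_fnet, intro ballI impI conjI)
      fix k assume k: "k \<in> {1..K}" and vk: "v k \<noteq> 0"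
      show "\<bar>w k\<bar> = 1" using wk k by simp
      have "x (Suc 1) \<le> - w k * b k" using kl(1)[OF k vk] by (simp add: numeral_2_eq_2)
      then show "(\<forall>t\<in>{..x (Suc 1)}. - w k * b k \<le> t) \<or> (\<forall>t\<in>{..x (Suc 1)}. t \<le> - w k * b k)" by auto
    qed
    then obtain A C where AC: "\<forall>t\<in>{..x (Suc 1)}. fnet K (v, w, b, a, c) t = t *\<^sub>R A + C" by blast
    have l: "x 1 < x (Suc 1)" by (rule ss_lt[OF s]) (use N in auto)
    have "fnet K (v, w, b, a, c) t = y 1 + (t - x 1) *\<^sub>R slope x y 1"
      by (rule interp_slope[OF aff_interp[OF AC]]) (use l True N fy in auto)
    then show ?thesis using cd th by simp
  next
    case False
    then obtain i where i: "1 \<le> i" "i \<le> N - 1" "x i \<le> t" "i < N - 1 \<longrightarrow> t \<le> x (Suc i)"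
      using interval_ex[OF s N] by force
    have cd: "connect_dots N x y t = y i + (t - x i) *\<^sub>R slope x y i"
      unfolding connect_EE[OF s N] by (rule EE_on[OF s]) (use i in auto)
    have l: "x i < x (Suc i)" by (rule ss_lt[OF s]) (use i in auto)
    have fi: "fnet K (v, w, b, a, c) (x i) = y i" "fnet K (v, w, b, a, c) (x (Suc i)) = y (Suc i)"
      using fy i by auto
    show ?thesis
    proof (cases "i < N - 1")
      case True
      have "\<exists>A C. \<forall>t\<in>{x i..x (Suc i)}. fnet K (v, w, b, a, c) t = t *\<^sub>R A + C"
      proof (rule aff_fnet, intro ballI impI conjI)
        fix k assume k: "k \<in> {1..K}" and vk: "v k \<noteq> 0"
        show "\<bar>w k\<bar> = 1" using wk k by simp
        have "\<not> (x i < - w k * b k \<and> - w k * b k < x (Suc i))" using kl(3)[OF k vk, of i] i True by auto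
        then show "(\<forall>t\<in>{x i..x (Suc i)}. - w k * b k \<le> t) \<or> (\<forall>t\<in>{x i..x (Suc i)}. t \<le> - w k * b k)"
          by force
      qed
      then obtain A C where AC: "\<forall>t\<in>{x i..x (Suc i)}. fnet K (v, w, b, a, c) t = t *\<^sub>R A + C" by blast
      have "fnet K (v, w, b, a, c) t = y i + (t - x i) *\<^sub>R slope x y i"
        by (rule interp_slope[OF aff_interp[OF AC] fi]) (use l True i in auto)
      then show ?thesis using cd th by simp
    next
      case False
      then have iN: "i = N - 1" using i by auto
      have "\<exists>A C. \<forall>t\<in>{x i..}. fnet K (v, w, b, a, c) t = t *\<^sub>R A + C"
      proof (rule aff_fnet, intro ballI impI conjI)
        fix k assume k: "k \<in> {1..K}" and vk: "v k \<noteq> 0"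
        show "\<bar>w k\<bar> = 1" using wk k by simp
        have "- w k * b k \<le> x i" using kl(2)[OF k vk] iN by simp
        then show "(\<forall>t\<in>{x i..}. - w k * b k \<le> t) \<or> (\<forall>t\<in>{x i..}. t \<le> - w k * b k)"
          by auto
      qed
      then obtain A C where AC: "\<forall>t\<in>{x i..}. fnet K (v, w, b, a, c) t = t *\<^sub>R A + C" by blast
      have "fnet K (v, w, b, a, c) t = y i + (t - x i) *\<^sub>R slope x y i"
        by (rule interp_slope[OF aff_interp[OF AC] fi]) (use l i in auto)
      then show ?thesis using cd th by simp
    qed
  qed
qed

lemma sum_upd2:
  fixes F1 F2 :: "nat \<Rightarrow> 'a::ab_group_add"
  assumes "finite A" "i \<in> A" "j \<in> A" "i \<noteq> j" "\<And>k. k \<in> A \<Longrightarrow> k \<noteq> i \<Longrightarrow> k \<noteq> j \<Longrightarrow> F2 k = F1 k"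
  shows "sum F2 A = sum F1 A + (F2 i + F2 j - F1 i - F1 j)"
proof -
  have sub: "{i, j} \<subseteq> A" using assms by auto
  have e: "\<And>F :: nat \<Rightarrow> 'a. sum F A = sum F (A - {i, j}) + (F i + F j)"
    using sum.subset_diff[OF sub assms(1)] assms(4) by simp
  have "sum F2 (A - {i, j}) = sum F1 (A - {i, j})" by (rule sum.cong) (use assms(5) in auto)
  then show ?thesis using e[of F1] e[of F2] by (simp add: algebra_simps)
qed

definition v1 :: "nat \<Rightarrow> (nat \<Rightarrow> real) \<Rightarrow> (nat \<Rightarrow> real ^ 't::finite) \<Rightarrow> nat \<Rightarrow> real ^ 't" where
  "v1 N x y = (\<lambda>k. if k \<in> {2..N - 1} then dd x y k else 0)"
definition b1 :: "nat \<Rightarrow> (nat \<Rightarrow> real) \<Rightarrow> nat \<Rightarrow> real" where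
  "b1 N x = (\<lambda>k. if k \<in> {2..N - 1} then - x k else 0)"

lemma cd_net_alt: "cd_net N x y = (v1 N x y, \<lambda>k. 1, b1 N x, slope x y 1, y 1 - x 1 *\<^sub>R slope x y 1)"
  unfolding cd_net_def v1_def b1_def by simp

definition alt_net :: "nat \<Rightarrow> (nat \<Rightarrow> real) \<Rightarrow> (nat \<Rightarrow> real ^ 't::finite) \<Rightarrow> nat \<Rightarrow> real \<Rightarrow> 't param" where
  "alt_net N x y i q = ((v1 N x y)(i := dd x y i + dd x y (Suc i), Suc i := 0), \<lambda>k. 1,
     (b1 N x)(i := - q), slope x y 1, y 1 - x 1 *\<^sub>R slope x y 1)"

lemma fnet_alt:
  assumes i: "i \<in> {2..N - 2}" and K: "K \<ge> N - 1"
  shows "fnet K (alt_net N x y i q) t = fnet K (cd_net N x y) t +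
     (relu (t - q) *\<^sub>R (dd x y i + dd x y (Suc i)) - relu (t - x i) *\<^sub>R dd x y i
       - relu (t - x (Suc i)) *\<^sub>R dd x y (Suc i))"
proof -
  define F1 where "F1 = (\<lambda>k. relu (1 * t + b1 N x k) *\<^sub>R v1 N x y k)"
  define F2 where "F2 = (\<lambda>k. relu (1 * t + ((b1 N x)(i := - q)) k) *\<^sub>R
     ((v1 N x y)(i := dd x y i + dd x y (Suc i), Suc i := 0)) k)"
  have iK: "i \<in> {1..K}" "Suc i \<in> {1..K}" using i K by auto
  have "sum F2 {1..K} = sum F1 {1..K} + (F2 i + F2 (Suc i) - F1 i - F1 (Suc i))"
    by (rule sum_upd2) (use iK in \<open>auto simp: F1_def F2_def\<close>)
  moreover have "F2 i + F2 (Suc i) - F1 i - F1 (Suc i) =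
     relu (t - q) *\<^sub>R (dd x y i + dd x y (Suc i)) - relu (t - x i) *\<^sub>R dd x y i
       - relu (t - x (Suc i)) *\<^sub>R dd x y (Suc i)"
    using i unfolding F1_def F2_def v1_def b1_def by auto
  ultimately show ?thesis
    unfolding fnet_def alt_net_def cd_net_alt prod.case F1_def F2_def by (simp add: algebra_simps)
qed

lemma cost_alt:
  assumes i: "i \<in> {2..N - 2}" and K: "K \<ge> N - 1"
  shows "cost K (alt_net N x y i q) = cost K (cd_net N x y) +
     (norm (dd x y i + dd x y (Suc i)) - norm (dd x y i) - norm (dd x y (Suc i)))"
proof -
  define F1 where "F1 = (\<lambda>k. norm (v1 N x y k))"
  define F2 where "F2 = (\<lambda>k. norm (((v1 N x y)(i := dd x y i + dd x y (Suc i), Suc i := 0)) k))"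
  have iK: "i \<in> {1..K}" "Suc i \<in> {1..K}" using i K by auto
  have "sum F2 {1..K} = sum F1 {1..K} + (F2 i + F2 (Suc i) - F1 i - F1 (Suc i))"
    by (rule sum_upd2) (use iK in \<open>auto simp: F1_def F2_def\<close>)
  moreover have "F2 i + F2 (Suc i) - F1 i - F1 (Suc i) =
     norm (dd x y i + dd x y (Suc i)) - norm (dd x y i) - norm (dd x y (Suc i))"
    using i unfolding F1_def F2_def v1_def by auto
  ultimately show ?thesis
    unfolding cost_def alt_net_def cd_net_alt prod.case F1_def F2_def by simp
qed

lemma optimal_of_LB:
  assumes s: "strictly_sorted N x" and N: "N \<ge> 2" and f: "feasible K N x y \<theta>" and c: "cost K \<theta> = LB N x y"
  shows "optimal K N x y \<theta>"
  unfolding optimal_def using f c lower_bound[OF _ s N] by auto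

lemma nonunique_of_align:
  assumes s: "strictly_sorted N x" and N: "N \<ge> 2" and K: "K \<ge> N - 1" and ac: "alignment_condition N x y"
  shows "nonunique K N x y"
proof -
  obtain i where i: "i \<in> {2..N - 2}" and d1: "dd x y i \<noteq> 0" and d2: "dd x y (Suc i) \<noteq> 0"
    and al: "aligned (dd x y i) (dd x y (Suc i))"
    using ac unfolding alignment_condition_def dd_def by auto
  define D1 where "D1 = dd x y i"
  define D2 where "D2 = dd x y (Suc i)"
  define \<alpha> where "\<alpha> = norm D1"
  define \<beta> where "\<beta> = norm D2"
  define q where "q = (\<alpha> * x i + \<beta> * x (Suc i)) / (\<alpha> + \<beta>)"
  define h where "h = x (Suc i) - x i"
  have ap: "\<alpha> > 0" "\<beta> > 0" using d1 d2 unfolding \<alpha>_def \<beta>_def D1_def D2_def by auto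
  have hp: "h > 0" unfolding h_def using ss_lt[OF s, of i "Suc i"] i by auto
  have al2: "\<alpha> *\<^sub>R D2 = \<beta> *\<^sub>R D1"
    using al norm_cauchy_schwarz_eq unfolding aligned_def \<alpha>_def \<beta>_def D1_def D2_def by blast
  have q1: "q - x i = \<beta> * h / (\<alpha> + \<beta>)" unfolding q_def h_def using ap by (simp add: field_simps)
  have q2: "x (Suc i) - q = \<alpha> * h / (\<alpha> + \<beta>)" unfolding q_def h_def using ap by (simp add: field_simps)
  have pos1: "\<beta> * h / (\<alpha> + \<beta>) > 0" "\<alpha> * h / (\<alpha> + \<beta>) > 0" using ap hp by auto
  have qi: "x i < q" "q < x (Suc i)" using q1 q2 pos1 by linarith+
  define br where "br = (\<lambda>t. relu (t - q) *\<^sub>R (D1 + D2) - relu (t - x i) *\<^sub>R D1 - relu (t - x (Suc i)) *\<^sub>R D2)"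
  have fa: "\<And>t. fnet K (alt_net N x y i q) t = fnet K (cd_net N x y) t + br t"
    unfolding br_def D1_def D2_def by (rule fnet_alt[OF i K])
  have zero: "(x i - q) *\<^sub>R D1 + (x (Suc i) - q) *\<^sub>R D2 = 0"
  proof -
    have "(x i - q) *\<^sub>R D1 + (x (Suc i) - q) *\<^sub>R D2 = (h / (\<alpha> + \<beta>)) *\<^sub>R (\<alpha> *\<^sub>R D2 - \<beta> *\<^sub>R D1)"
    proof -
      have e: "x i - q = - (\<beta> * h / (\<alpha> + \<beta>))" using q1 by simp
      have c: "h / (\<alpha> + \<beta>) * \<alpha> = \<alpha> * h / (\<alpha> + \<beta>)" "h / (\<alpha> + \<beta>) * \<beta> = \<beta> * h / (\<alpha> + \<beta>)" by simp_all
      show ?thesis unfolding e q2 by (simp add: scaleR_diff_right scaleR_scaleR mult.commute)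
    qed
    then show ?thesis using al2 by simp
  qed
  have brx: "br (x j) = 0" if j: "j \<in> {1..N}" for j
  proof (cases "j \<le> i")
    case True
    have "x j \<le> x i" by (rule ss_le[OF s]) (use j True i in auto)
    then show ?thesis unfolding br_def relu_def using qi by auto
  next
    case False
    have "x (Suc i) \<le> x j" by (rule ss_le[OF s]) (use j False i in auto)
    then have "br (x j) = (x j - q) *\<^sub>R (D1 + D2) - (x j - x i) *\<^sub>R D1 - (x j - x (Suc i)) *\<^sub>R D2"
      unfolding br_def relu_def using qi by auto
    also have "\<dots> = (x i - q) *\<^sub>R D1 + (x (Suc i) - q) *\<^sub>R D2" by (simp add: algebra_simps)
    finally show ?thesis using zero by simp
  qed
  have feas: "feasible K N x y (alt_net N x y i q)"
    unfolding feasible_def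
  proof (intro conjI ballI)
    fix j assume j: "j \<in> {1..N}"
    show "fnet K (alt_net N x y i q) (x j) = y j"
      unfolding fa brx[OF j] using feasible_cd[OF s N K, of y] j unfolding feasible_def by auto
  qed (auto simp: alt_net_def)
  have "norm (D1 + D2) = norm D1 + norm D2" using al2 norm_triangle_eq unfolding \<alpha>_def \<beta>_def by blast
  then have "cost K (alt_net N x y i q) = LB N x y"
    using cost_alt[OF i K, of x y q] cost_cd[OF K] unfolding D1_def D2_def by simp
  then have o2: "optimal K N x y (alt_net N x y i q)" by (rule optimal_of_LB[OF s N feas])
  have "br q = - ((q - x i) *\<^sub>R D1)" unfolding br_def relu_def using qi by auto
  moreover have "(q - x i) *\<^sub>R D1 \<noteq> 0" using qi d1 unfolding D1_def by auto
  ultimately have "fnet K (alt_net N x y i q) q \<noteq> fnet K (cd_net N x y) q" using fa by auto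
  then show ?thesis unfolding nonunique_def using o2 optimal_cd[OF s N K] by metis
qed

lemma hyper_null:
  fixes a :: "real ^ 't::finite"
  assumes "a \<noteq> 0"
  shows "{u. a \<bullet> u = k} \<in> null_sets lborel"
proof -
  have "negligible {u. a \<bullet> u = k}" using negligible_hyperplane assms by blast
  then have n: "{u. a \<bullet> u = k} \<in> null_sets lebesgue" using negligible_iff_null_sets by blast
  have "{u. a \<bullet> u = k} \<in> sets lborel" by measurable
  then show ?thesis using n null_sets_completion_iff by blast
qed

lemma line_null:
  fixes D1 :: "real ^ 't::finite"
  assumes T: "CARD('t) > 1" and D1: "D1 \<noteq> 0" and c: "c \<noteq> 0"
  shows "\<exists>H \<in> null_sets lborel. {u. aligned D1 (c *\<^sub>R (u - z) - s)} \<subseteq> H"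
proof -
  have "2 \<le> DIM(real ^ 't)" using T by simp
  then obtain a :: "real ^ 't" where a: "a \<noteq> 0" "orthogonal D1 a" using orthogonal_to_vector_exists by blast
  have aD: "a \<bullet> D1 = 0" using a(2) unfolding orthogonal_def by (simp add: inner_commute)
  show ?thesis
  proof (intro bexI)
    show "{u. a \<bullet> u = a \<bullet> z + (a \<bullet> s) / c} \<in> null_sets lborel" by (rule hyper_null[OF a(1)])
    show "{u. aligned D1 (c *\<^sub>R (u - z) - s)} \<subseteq> {u. a \<bullet> u = a \<bullet> z + (a \<bullet> s) / c}"
    proof clarify
      fix u assume al: "aligned D1 (c *\<^sub>R (u - z) - s)"
      define D2 where "D2 = c *\<^sub>R (u - z) - s"
      have "norm D1 *\<^sub>R D2 = norm D2 *\<^sub>R D1" using al norm_cauchy_schwarz_eq unfolding aligned_def D2_def by blast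
      then have "norm D1 * (a \<bullet> D2) = norm D2 * (a \<bullet> D1)"
        by (metis inner_scaleR_right)
      then have "a \<bullet> D2 = 0" using aD D1 by simp
      then have "c * (a \<bullet> u) - c * (a \<bullet> z) - a \<bullet> s = 0" unfolding D2_def by (simp add: inner_diff_right algebra_simps)
      then show "a \<bullet> u = a \<bullet> z + (a \<bullet> s) / c" using c by (simp add: field_simps)
    qed
  qed
qed

lemma comp_fst:
  assumes "j \<in> {1..N}"
  shows "(\<lambda>\<omega>. fst \<omega> j) \<in> borel_measurable (data_measure N :: ((nat \<Rightarrow> real) \<times> (nat \<Rightarrow> real ^ 't::finite)) measure)"
proof -
  have "(\<lambda>x. x j) \<in> measurable (PiM {1..N} (\<lambda>_. lborel :: real measure)) lborel"
    by (rule measurable_component_singleton) (use assms in auto)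
  then have "(\<lambda>x. x j) \<in> borel_measurable (PiM {1..N} (\<lambda>_. lborel :: real measure))"
    using measurable_cong_sets[OF refl sets_lborel] by blast
  then show ?thesis unfolding data_measure_def by (rule measurable_fst'')
qed

lemma comp_snd:
  assumes "j \<in> {1..N}"
  shows "(\<lambda>\<omega>. snd \<omega> j) \<in> borel_measurable (data_measure N :: ((nat \<Rightarrow> real) \<times> (nat \<Rightarrow> real ^ 't::finite)) measure)"
proof -
  have "(\<lambda>x. x j) \<in> measurable (PiM {1..N} (\<lambda>_. lborel :: (real ^ 't) measure)) lborel"
    by (rule measurable_component_singleton) (use assms in auto)
  then have "(\<lambda>x. x j) \<in> borel_measurable (PiM {1..N} (\<lambda>_. lborel :: (real ^ 't) measure))"
    using measurable_cong_sets[OF refl sets_lborel] by blast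
  then show ?thesis unfolding data_measure_def by (rule measurable_snd'')
qed

lemma slope_meas:
  assumes "j \<in> {1..N}" "Suc j \<in> {1..N}"
  shows "(\<lambda>\<omega>. slope (fst \<omega>) (snd \<omega>) j) \<in> borel_measurable (data_measure N :: ((nat \<Rightarrow> real) \<times> (nat \<Rightarrow> real ^ 't::finite)) measure)"
proof -
  note [measurable] = comp_fst[OF assms(1)] comp_fst[OF assms(2)] comp_snd[OF assms(1), where 't='t] comp_snd[OF assms(2), where 't='t]
  show ?thesis unfolding slope_def by measurable
qed

lemma Z_meas:
  assumes i: "i \<in> {2..N - 2}"
  shows "{\<omega> \<in> space (data_measure N :: ((nat \<Rightarrow> real) \<times> (nat \<Rightarrow> real ^ 't::finite)) measure).
     fst \<omega> (Suc (Suc i)) \<noteq> fst \<omega> (Suc i) \<and> dd (fst \<omega>) (snd \<omega>) i \<noteq> 0 \<and>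
     aligned (dd (fst \<omega>) (snd \<omega>) i) (dd (fst \<omega>) (snd \<omega>) (Suc i))} \<in> sets (data_measure N)"
proof -
  have ix: "i - 1 \<in> {1..N}" "i \<in> {1..N}" "Suc i \<in> {1..N}" "Suc (Suc i) \<in> {1..N}" "Suc (i - 1) = i"
    using i by auto
  have ix2: "Suc (i - 1) \<in> {1..N}" using ix by simp
  note [measurable] = slope_meas[OF ix(1) ix2, unfolded ix(5), where 't='t]
     slope_meas[OF ix(2) ix(3), where 't='t] slope_meas[OF ix(3) ix(4), where 't='t]
     comp_fst[OF ix(3), where 't='t] comp_fst[OF ix(4), where 't='t]
  define F where "F = (data_measure N :: ((nat \<Rightarrow> real) \<times> (nat \<Rightarrow> real ^ 't::finite)) measure)"
  have D1: "(\<lambda>\<omega>. dd (fst \<omega>) (snd \<omega>) i) \<in> borel_measurable F"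
    unfolding dd_def F_def by (intro borel_measurable_diff) measurable
  have D2: "(\<lambda>\<omega>. dd (fst \<omega>) (snd \<omega>) (Suc i)) \<in> borel_measurable F"
    unfolding dd_def F_def by (simp only: diff_Suc_1) (intro borel_measurable_diff; measurable)
  have p1: "Measurable.pred F (\<lambda>\<omega>. fst \<omega> (Suc (Suc i)) = fst \<omega> (Suc i))"
    unfolding pred_def F_def by (rule measurable_equality_set) measurable
  have p2: "Measurable.pred F (\<lambda>\<omega>. dd (fst \<omega>) (snd \<omega>) i = 0)"
    unfolding pred_def by (rule measurable_equality_set[OF D1]) simp
  have p3: "Measurable.pred F (\<lambda>\<omega>. inner (dd (fst \<omega>) (snd \<omega>) i) (dd (fst \<omega>) (snd \<omega>) (Suc i))
      = norm (dd (fst \<omega>) (snd \<omega>) i) * norm (dd (fst \<omega>) (snd \<omega>) (Suc i)))"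
  proof -
    have n1: "(\<lambda>\<omega>. norm (dd (fst \<omega>) (snd \<omega>) i)) \<in> borel_measurable F"
      using measurable_compose[OF D1 borel_measurable_norm] by simp
    have n2: "(\<lambda>\<omega>. norm (dd (fst \<omega>) (snd \<omega>) (Suc i))) \<in> borel_measurable F"
      using measurable_compose[OF D2 borel_measurable_norm] by simp
    show ?thesis unfolding pred_def
      by (intro measurable_equality_set borel_measurable_times n1 n2 borel_measurable_inner D1 D2)
  qed
  have "Measurable.pred F (\<lambda>\<omega>. fst \<omega> (Suc (Suc i)) \<noteq> fst \<omega> (Suc i) \<and> dd (fst \<omega>) (snd \<omega>) i \<noteq> 0 \<and>
     aligned (dd (fst \<omega>) (snd \<omega>) i) (dd (fst \<omega>) (snd \<omega>) (Suc i)))"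
    unfolding aligned_def using p1 p2 p3 by (intro pred_intros_logic)
  then show ?thesis unfolding pred_def F_def .
qed

lemma dd_upd: "i \<ge> 1 \<Longrightarrow> dd x (z(Suc (Suc i) := u)) i = dd x z i"
proof -
  have "i - 1 \<noteq> Suc (Suc i)" "i - 1 \<noteq> Suc i" by arith+
  then show ?thesis unfolding dd_def slope_def by simp
qed

lemma dd_upd2: "i \<ge> 1 \<Longrightarrow> dd x (z(Suc (Suc i) := u)) (Suc i) =
   (1 / (x (Suc (Suc i)) - x (Suc i))) *\<^sub>R (u - z (Suc i)) - slope x z i"
  unfolding dd_def slope_def by simp

lemma Z_null:
  assumes T: "CARD('t::finite) > 1" and i: "i \<in> {2..N - 2}"
  shows "{\<omega> \<in> space (data_measure N :: ((nat \<Rightarrow> real) \<times> (nat \<Rightarrow> real ^ 't)) measure).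
     fst \<omega> (Suc (Suc i)) \<noteq> fst \<omega> (Suc i) \<and> dd (fst \<omega>) (snd \<omega>) i \<noteq> 0 \<and>
     aligned (dd (fst \<omega>) (snd \<omega>) i) (dd (fst \<omega>) (snd \<omega>) (Suc i))} \<in> null_sets (data_measure N)"
    (is "?Z \<in> _")
proof -
  define M1 where "M1 = (PiM {1..N} (\<lambda>_. lborel) :: (nat \<Rightarrow> real) measure)"
  define M2 where "M2 = (PiM {1..N} (\<lambda>_. lborel) :: (nat \<Rightarrow> real ^ 't) measure)"
  define j where "j = Suc (Suc i)"
  define I where "I = {1..N} - {j}"
  have jI: "{1..N} = insert j I" "finite I" "j \<notin> I" unfolding I_def j_def using i by auto
  interpret P2: product_sigma_finite "\<lambda>_. lborel :: (real ^ 't) measure" by standard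
  interpret S2: sigma_finite_measure M2 unfolding M2_def by (rule P2.sigma_finite) simp
  have Zs: "?Z \<in> sets (M1 \<Otimes>\<^sub>M M2)" using Z_meas[OF i] unfolding data_measure_def M1_def M2_def .
  have sec: "emeasure M2 (Pair x -` ?Z) = 0" for x
  proof (cases "x j = x (Suc i)")
    case True
    then have "x (Suc (Suc i)) = x (Suc i)" unfolding j_def .
    then have "Pair x -` ?Z = {}" by auto
    then show ?thesis by (metis emeasure_empty)
  next
    case False
    define c where "c = 1 / (x j - x (Suc i))"
    have c0: "c \<noteq> 0" unfolding c_def using False by simp
    define S where "S = Pair x -` ?Z"
    have Ss: "S \<in> sets M2" unfolding S_def using sets_Pair1[OF Zs] .
    have inner0: "(\<integral>\<^sup>+ u. indicator S (z(j := u)) \<partial>lborel) = 0" for z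
    proof (cases "dd x z i = 0")
      case True
      have "\<And>u. indicator S (z(j := u)) = (0 :: ennreal)"
        unfolding S_def j_def using True dd_upd[of i x z] i by (auto simp: indicator_def)
      then show ?thesis by simp
    next
      case False
      obtain H where H: "H \<in> null_sets lborel" "{u. aligned (dd x z i) (c *\<^sub>R (u - z (Suc i)) - slope x z i)} \<subseteq> H"
        using line_null[OF T False c0] by blast
      have "(\<integral>\<^sup>+ u. indicator S (z(j := u)) \<partial>lborel) \<le> (\<integral>\<^sup>+ u. indicator H u \<partial>lborel)"
      proof (rule nn_integral_mono)
        fix u :: "real ^ 't"
        show "indicator S (z(j := u)) \<le> (indicator H u :: ennreal)"
        proof (cases "z(j := u) \<in> S")
          case True
          then have "aligned (dd x (z(j := u)) i) (dd x (z(j := u)) (Suc i))" unfolding S_def by auto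
          then have "aligned (dd x z i) (c *\<^sub>R (u - z (Suc i)) - slope x z i)"
            unfolding j_def c_def using dd_upd[of i x z u] dd_upd2[of i x z u] i by simp
          then have "u \<in> H" using H(2) by auto
          then show ?thesis using True by simp
        qed simp
      qed
      also have "\<dots> = emeasure lborel H" using H(1) by (intro nn_integral_indicator) auto
      also have "\<dots> = 0" using H(1) by auto
      finally show ?thesis by simp
    qed
    have "emeasure M2 S = (\<integral>\<^sup>+ y. indicator S y \<partial>M2)" using Ss by (simp add: nn_integral_indicator)
    also have "\<dots> = (\<integral>\<^sup>+ z. (\<integral>\<^sup>+ u. indicator S (z(j := u)) \<partial>lborel) \<partial>(PiM I (\<lambda>_. lborel)))"
      unfolding M2_def jI(1)
      by (rule P2.product_nn_integral_insert[OF jI(2) jI(3)]) (rule borel_measurable_indicator, use Ss in \<open>simp only: M2_def jI(1)\<close>)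
    also have "\<dots> = 0" by (simp add: inner0)
    finally show ?thesis unfolding S_def .
  qed
  have "emeasure (M1 \<Otimes>\<^sub>M M2) ?Z = (\<integral>\<^sup>+ x. emeasure M2 (Pair x -` ?Z) \<partial>M1)"
    by (rule S2.emeasure_pair_measure_alt[OF Zs])
  also have "\<dots> = (\<integral>\<^sup>+ x. 0 \<partial>M1)" by (rule nn_integral_cong) (rule sec)
  also have "\<dots> = 0" by simp
  finally have "emeasure (M1 \<Otimes>\<^sub>M M2) ?Z = 0" .
  then show ?thesis using Zs unfolding data_measure_def M1_def M2_def by (intro null_setsI)
qed

lemma nonunique_iff:
  assumes s: "strictly_sorted N x" and N: "N \<ge> 2" and K: "K \<ge> N - 1"
  shows "nonunique K N x y \<longleftrightarrow> alignment_condition N x y"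
proof
  assume nu: "nonunique K N x y"
  show "alignment_condition N x y"
  proof (rule ccontr)
    assume na: "\<not> alignment_condition N x y"
    obtain th th' where "optimal K N x y th" "optimal K N x y th'" "fnet K th \<noteq> fnet K th'"
      using nu unfolding nonunique_def by blast
    then show False using unique_fnet[OF _ s N K na] by metis
  qed
next
  assume "alignment_condition N x y"
  then show "nonunique K N x y" by (rule nonunique_of_align[OF s N K])
qed

theorem theorem1:
  fixes N K :: nat and x :: "nat \<Rightarrow> real" and y :: "nat \<Rightarrow> real ^ 't::finite"
  assumes "N \<ge> 2" and "K \<ge> N ^ 2" and "strictly_sorted N x"
  shows "is_solution K N x y (connect_dots N x y)
    \<and> (nonunique K N x y \<longleftrightarrow> alignment_condition N x y)
    \<and> (\<not> alignment_condition N x y \<longrightarrow>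
         (\<forall>f. is_solution K N x y f \<longrightarrow> f = connect_dots N x y))
    \<and> (CARD('t) > 1 \<longrightarrow>
         (\<exists>B \<in> null_sets (data_measure N :: ((nat \<Rightarrow> real) \<times> (nat \<Rightarrow> real ^ 't)) measure).
            {(x', y') \<in> space (data_measure N :: ((nat \<Rightarrow> real) \<times> (nat \<Rightarrow> real ^ 't)) measure).
               strictly_sorted N x' \<and> nonunique K N x' y'} \<subseteq> B))"
proof -
  note N = assms(1) and s = assms(3)
  have K: "K \<ge> N - 1"
  proof -
    have "N \<le> N ^ 2" by (simp add: power2_eq_square)
    then show ?thesis using assms(2) by linarith
  qed
  have p1: "is_solution K N x y (connect_dots N x y)" by (rule sol_cd[OF s N K])
  have p2: "nonunique K N x y \<longleftrightarrow> alignment_condition N x y" by (rule nonunique_iff[OF s N K])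
  have p3: "\<not> alignment_condition N x y \<longrightarrow> (\<forall>f. is_solution K N x y f \<longrightarrow> f = connect_dots N x y)"
  proof (intro impI allI)
    fix f assume na: "\<not> alignment_condition N x y" and "is_solution K N x y f"
    then obtain th where "optimal K N x y th" "f = fnet K th" unfolding is_solution_def by blast
    then show "f = connect_dots N x y" using unique_fnet[OF _ s N K na] by simp
  qed
  have p4: "CARD('t) > 1 \<longrightarrow>
         (\<exists>B \<in> null_sets (data_measure N :: ((nat \<Rightarrow> real) \<times> (nat \<Rightarrow> real ^ 't)) measure).
            {(x', y') \<in> space (data_measure N :: ((nat \<Rightarrow> real) \<times> (nat \<Rightarrow> real ^ 't)) measure).
               strictly_sorted N x' \<and> nonunique K N x' y'} \<subseteq> B)"
  proof
    assume T: "CARD('t) > 1"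
    define Zi where "Zi = (\<lambda>i. {\<omega> \<in> space (data_measure N :: ((nat \<Rightarrow> real) \<times> (nat \<Rightarrow> real ^ 't)) measure).
     fst \<omega> (Suc (Suc i)) \<noteq> fst \<omega> (Suc i) \<and> dd (fst \<omega>) (snd \<omega>) i \<noteq> 0 \<and>
     aligned (dd (fst \<omega>) (snd \<omega>) i) (dd (fst \<omega>) (snd \<omega>) (Suc i))})"
    show "\<exists>B \<in> null_sets (data_measure N :: ((nat \<Rightarrow> real) \<times> (nat \<Rightarrow> real ^ 't)) measure).
            {(x', y') \<in> space (data_measure N :: ((nat \<Rightarrow> real) \<times> (nat \<Rightarrow> real ^ 't)) measure).
               strictly_sorted N x' \<and> nonunique K N x' y'} \<subseteq> B"
    proof (intro bexI)
      show "(\<Union>i\<in>{2..N - 2}. Zi i) \<in> null_sets (data_measure N)"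
        by (rule null_sets.finite_UN) (auto simp: Zi_def intro: Z_null[OF T])
      show "{(x', y') \<in> space (data_measure N :: ((nat \<Rightarrow> real) \<times> (nat \<Rightarrow> real ^ 't)) measure).
               strictly_sorted N x' \<and> nonunique K N x' y'} \<subseteq> (\<Union>i\<in>{2..N - 2}. Zi i)"
      proof clarify
        fix x' :: "nat \<Rightarrow> real" and y' :: "nat \<Rightarrow> real ^ 't"
        assume sp: "(x', y') \<in> space (data_measure N :: ((nat \<Rightarrow> real) \<times> (nat \<Rightarrow> real ^ 't)) measure)"
          and s': "strictly_sorted N x'" and nu: "nonunique K N x' y'"
        have "alignment_condition N x' y'" using nu nonunique_iff[OF s' N K, of y'] by simp
        then obtain i where i: "i \<in> {2..N - 2}" and d1: "dd x' y' i \<noteq> 0"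
          and al: "aligned (dd x' y' i) (dd x' y' (Suc i))"
          unfolding alignment_condition_def dd_def by auto
        have "x' (Suc i) < x' (Suc (Suc i))" by (rule ss_lt[OF s']) (use i in auto)
        then have "(x', y') \<in> Zi i" unfolding Zi_def using sp d1 al by auto
        then show "(x', y') \<in> (\<Union>i\<in>{2..N - 2}. Zi i)" using i by blast
      qed
    qed
  qed
  show ?thesis using p1 p2 p3 p4 by blast
qed

end
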